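(* Let $\psi:\mathbb{R}^d\to\mathbb{R}$ and suppose there is $b>0$ with $|\psi(x)|\le b$ for all $x\in\mathbb{R}^d$. Suppose $x^\star$ is an exact local minimum of $\psi$, i.e. there exists $\delta>0$ with $\psi(x^\star)\le\psi(x)$ for all $x$ with $\|x-x^\star\|\le\delta$. Then for every $\epsilon>0$ there exists $\sigma^\star>0$ such that for every $0<\sigma\le\sigma^\star$, $x^\star$ is an $(\epsilon,\sigma)$-approximate local minimum of $\psi$, i.e. $\|\nabla_x\mathcal{S}(x^\star)\|\le\epsilon$ and $\lambda_{\min}(\nabla_x^2\mathcal{S}(x^\star))\ge-\sqrt{\epsilon}$, where $\mathcal{S}(x):=\mathbb{E}_{\zeta\sim N(0,I_d)}[\min(\psi(x+\sigma\zeta),\psi(x^\star))]$.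
   Context: $\lambda_{\min}$ denotes the smallest eigenvalue of a symmetric matrix; $\|\cdot\|$ is the Euclidean norm. *)

theory Defs
  imports "HOL-Probability.Probability"
begin

definition std_gauss_density :: "real ^ 'n \<Rightarrow> real" where
  "std_gauss_density z = (2 * pi) powr (- real CARD('n) / 2) * exp (- (norm z)\<^sup>2 / 2)"

definition std_gauss :: "(real ^ 'n) measure" where
  "std_gauss = density lborel (\<lambda>z. ennreal (std_gauss_density z))"

definition lambda_min :: "real ^ 'n ^ 'n \<Rightarrow> real" where
  "lambda_min H = Min {l. \<exists>v. v \<noteq> 0 \<and> H *v v = l *\<^sub>R v}"

definition smoothed_obj :: "(real ^ 'n \<Rightarrow> real) \<Rightarrow> real ^ 'n \<Rightarrow> real \<Rightarrow> real ^ 'n \<Rightarrow> real" where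
  "smoothed_obj psi xs sg x =
     (\<integral>z. min (psi (x + sg *\<^sub>R z)) (psi xs) \<partial>std_gauss)"

definition approx_local_min :: "(real ^ 'n \<Rightarrow> real) \<Rightarrow> real \<Rightarrow> real \<Rightarrow> real ^ 'n \<Rightarrow> bool" where
  "approx_local_min psi eps sg xs \<longleftrightarrow>
     (\<exists>(G :: real ^ 'n \<Rightarrow> real ^ 'n) (H :: real ^ 'n ^ 'n).
        (\<forall>\<^sub>F x in nhds xs. (smoothed_obj psi xs sg has_derivative (\<lambda>h. G x \<bullet> h)) (at x)) \<and>
        (G has_derivative (\<lambda>h. H *v h)) (at xs) \<and>
        norm (G xs) \<le> eps \<and>
        lambda_min H \<ge> - sqrt eps)"

end

theory Submission
  imports Defs
begin

lemma sym_inner_mv: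
  fixes H :: "real^'n^'n"
  assumes sym: "\<And>i j. H$i$j = H$j$i"
  shows "x \<bullet> (H *v y) = y \<bullet> (H *v x)"
proof -
  have "x \<bullet> (H *v y) = (\<Sum>i\<in>UNIV. \<Sum>j\<in>UNIV. x$i * H$i$j * y$j)"
    by (simp add: inner_vec_def matrix_vector_mult_def sum_distrib_left mult.assoc)
  also have "\<dots> = (\<Sum>j\<in>UNIV. \<Sum>i\<in>UNIV. x$i * H$i$j * y$j)"
    by (rule sum.swap)
  also have "\<dots> = y \<bullet> (H *v x)"
    by (simp add: inner_vec_def matrix_vector_mult_def sum_distrib_left sym mult.commute mult.left_commute)
  finally show ?thesis .
qed

lemma eig_bound:
  fixes H :: "real^'n^'n"
  assumes "H *v v = l *\<^sub>R v" "v \<noteq> 0"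
  shows "\<bar>l\<bar> \<le> (\<Sum>i\<in>UNIV. \<Sum>j\<in>UNIV. \<bar>H$i$j\<bar>)"
proof -
  obtain i where i: "\<And>j. \<bar>v$j\<bar> \<le> \<bar>v$i\<bar>"
  proof -
    have "Max ((\<lambda>j. \<bar>v$j\<bar>) ` UNIV) \<in> (\<lambda>j. \<bar>v$j\<bar>) ` UNIV" by (rule Max_in) auto
    then obtain i where "\<bar>v$i\<bar> = Max ((\<lambda>j. \<bar>v$j\<bar>) ` UNIV)" by (metis (no_types, lifting) imageE)
    moreover have "\<bar>v$j\<bar> \<le> Max ((\<lambda>j. \<bar>v$j\<bar>) ` UNIV)" for j by (rule Max_ge) auto
    ultimately show ?thesis using that[of i] by simp
  qed
  have pos: "\<bar>v$i\<bar> > 0"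
  proof (rule ccontr)
    assume "\<not> ?thesis"
    then have "\<And>j. v$j = 0" using i by (metis abs_le_zero_iff not_less order_trans)
    then show False using assms(2) by (simp add: vec_eq_iff)
  qed
  have "l * v$i = (\<Sum>j\<in>UNIV. H$i$j * v$j)"
    using arg_cong[OF assms(1), of "\<lambda>w. w$i"] by (simp add: matrix_vector_mult_def)
  then have "\<bar>l\<bar> * \<bar>v$i\<bar> = \<bar>\<Sum>j\<in>UNIV. H$i$j * v$j\<bar>" by (simp add: abs_mult[symmetric])
  also have "\<dots> \<le> (\<Sum>j\<in>UNIV. \<bar>H$i$j * v$j\<bar>)" by (rule sum_abs)
  also have "\<dots> = (\<Sum>j\<in>UNIV. \<bar>H$i$j\<bar> * \<bar>v$j\<bar>)" by (simp add: abs_mult)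
  finally have "\<bar>l\<bar> * \<bar>v$i\<bar> \<le> (\<Sum>j\<in>UNIV. \<bar>H$i$j\<bar> * \<bar>v$j\<bar>)" .
  also have "\<dots> \<le> (\<Sum>j\<in>UNIV. \<bar>H$i$j\<bar> * \<bar>v$i\<bar>)"
    by (intro sum_mono mult_left_mono i) auto
  also have "\<dots> = (\<Sum>j\<in>UNIV. \<bar>H$i$j\<bar>) * \<bar>v$i\<bar>"
    by (simp add: sum_distrib_right)
  finally have "\<bar>l\<bar> \<le> (\<Sum>j\<in>UNIV. \<bar>H$i$j\<bar>)" using pos by simp
  also have "\<dots> \<le> (\<Sum>i\<in>UNIV. \<Sum>j\<in>UNIV. \<bar>H$i$j\<bar>)"
    by (rule member_le_sum) (auto intro: sum_nonneg)
  finally show ?thesis .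
qed

lemma quad_zero:
  fixes a B :: real
  assumes "\<And>t. 2 * t * a \<le> t^2 * B"
  shows "a = 0"
proof (rule ccontr)
  assume "a \<noteq> 0"
  define D where "D = \<bar>B\<bar> + 1"
  have dD: "D > 0" by (simp add: D_def)
  define t where "t = a / D"
  have "2 * t * a * D^2 \<le> t^2 * B * D^2" by (rule mult_right_mono[OF assms]) simp
  moreover have "2 * t * a * D^2 = 2 * a * a * D" using dD by (simp add: t_def power2_eq_square field_simps)
  moreover have "t^2 * B * D^2 = a * a * B" using dD by (simp add: t_def power2_eq_square field_simps)
  ultimately have "2 * a * a * D \<le> a * a * B" by linarith
  then have "2 * a * a * (\<bar>B\<bar> + 1) \<le> a * a * B" unfolding D_def .
  then have "(a * a) * (2 * (\<bar>B\<bar> + 1)) \<le> (a * a) * B" by (simp add: algebra_simps)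
  moreover have "a * a > 0" using \<open>a \<noteq> 0\<close> by (metis linorder_neqE_linordered_idom mult_neg_neg mult_pos_pos)
  ultimately have "2 * (\<bar>B\<bar> + 1) \<le> B"
    using mult_le_cancel_left_pos by blast
  then have "2 * \<bar>B\<bar> + 2 \<le> B" by (simp add: algebra_simps)
  then show False using abs_ge_self[of B] abs_ge_zero[of B] by linarith
qed

lemma sym_has_eig:
  fixes H :: "real^'n^'n"
  assumes sym: "\<And>i j. H$i$j = H$j$i"
  shows "\<exists>l v. v \<noteq> 0 \<and> H *v v = l *\<^sub>R v"
proof -
  define Q where "Q v = v \<bullet> (H *v v)" for v :: "real^'n"
  have cQ: "continuous_on (sphere 0 1) Q"
    unfolding Q_def by (intro continuous_intros linear_continuous_on matrix_vector_mul_linear)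
  obtain i :: 'n where True by simp
  have ne: "sphere (0::real^'n) 1 \<noteq> {}"
    by (metis norm_axis_1 mem_sphere_0 empty_iff)
  obtain u where u: "u \<in> sphere 0 1" and umax: "\<And>v. v \<in> sphere 0 1 \<Longrightarrow> Q v \<le> Q u"
    using continuous_attains_sup[OF compact_sphere ne cQ] by blast
  define l where "l = Q u"
  have Qhom: "Q (c *\<^sub>R v) = c^2 * Q v" for c v
    by (simp add: Q_def matrix_vector_mult_scaleR power2_eq_square)
  have Qle: "Q v \<le> l * (norm v)^2" for v
  proof (cases "v = 0")
    case True then show ?thesis by (simp add: Q_def)
  next
    case False
    then have "Q ((1/norm v) *\<^sub>R v) \<le> l" unfolding l_def by (intro umax) simp
    then have "(1/norm v)^2 * Q v \<le> l" by (simp add: Qhom)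
    then show ?thesis using False by (simp add: field_simps power2_eq_square)
  qed
  have nu: "norm u = 1" using u by simp
  have key: "w \<bullet> (H *v u - l *\<^sub>R u) = 0" for w
  proof -
    have "2 * t * (w \<bullet> (H *v u - l *\<^sub>R u)) \<le> t^2 * (l * (norm w)^2 - Q w)" for t
    proof -
      have "Q (u + t *\<^sub>R w) \<le> l * (norm (u + t *\<^sub>R w))^2" by (rule Qle)
      moreover have "Q (u + t *\<^sub>R w) = Q u + 2 * t * (w \<bullet> (H *v u)) + t^2 * Q w"
        using sym_inner_mv[OF sym, of u w]
        by (simp add: Q_def matrix_vector_right_distrib matrix_vector_mult_scaleR inner_add_left inner_add_right power2_eq_square algebra_simps)
      moreover have "(norm (u + t *\<^sub>R w))^2 = 1 + 2 * t * (w \<bullet> u) + t^2 * (norm w)^2"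
      proof -
        have uu: "u \<bullet> u = 1" using nu by (simp add: power2_norm_eq_inner[symmetric])
        have "(norm (u + t *\<^sub>R w))^2 = (u + t *\<^sub>R w) \<bullet> (u + t *\<^sub>R w)" by (simp add: power2_norm_eq_inner)
        also have "\<dots> = u \<bullet> u + 2 * t * (w \<bullet> u) + t^2 * (w \<bullet> w)"
          by (simp add: inner_add_left inner_add_right inner_commute power2_eq_square algebra_simps)
        finally show ?thesis using uu by (simp add: power2_norm_eq_inner)
      qed
      ultimately show ?thesis unfolding l_def
        by (simp add: inner_diff_right algebra_simps)
    qed
    then show ?thesis by (rule quad_zero)
  qed
  have "H *v u - l *\<^sub>R u = 0"
    using key[of "H *v u - l *\<^sub>R u"] by simp
  moreover have "u \<noteq> 0" using nu by auto
  ultimately show ?thesis by auto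
qed

lemma sym_eig_finite:
  fixes H :: "real^'n^'n"
  assumes sym: "\<And>i j. H$i$j = H$j$i"
  shows "finite {l. \<exists>v. v \<noteq> 0 \<and> H *v v = l *\<^sub>R v}"
proof -
  define L where "L = {l. \<exists>v. v \<noteq> 0 \<and> H *v v = l *\<^sub>R v}"
  define ev where "ev l = (SOME v. v \<noteq> 0 \<and> H *v v = l *\<^sub>R v)" for l
  have ev: "ev l \<noteq> 0 \<and> H *v ev l = l *\<^sub>R ev l" if "l \<in> L" for l
  proof -
    have "\<exists>v. v \<noteq> 0 \<and> H *v v = l *\<^sub>R v" using that by (simp add: L_def)
    then show ?thesis unfolding ev_def by (rule someI_ex)
  qed
  have inj: "inj_on ev L"
  proof
    fix l1 l2 assume "l1 \<in> L" "l2 \<in> L" "ev l1 = ev l2"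
    then have "l1 *\<^sub>R ev l1 = l2 *\<^sub>R ev l1" using ev by metis
    then show "l1 = l2" using ev[OF \<open>l1 \<in> L\<close>] by (simp add: scaleR_cancel_right)
  qed
  have orth: "pairwise orthogonal (ev ` L)"
    unfolding pairwise_def orthogonal_def
  proof (clarify)
    fix l1 l2 assume l: "l1 \<in> L" "l2 \<in> L" "ev l1 \<noteq> ev l2"
    then have ne: "l1 \<noteq> l2" by auto
    have "l1 * (ev l1 \<bullet> ev l2) = (H *v ev l1) \<bullet> ev l2" using ev[OF l(1)] by simp
    also have "\<dots> = ev l2 \<bullet> (H *v ev l1)" by (simp add: inner_commute)
    also have "\<dots> = ev l1 \<bullet> (H *v ev l2)" by (rule sym_inner_mv[OF sym])
    also have "\<dots> = l2 * (ev l1 \<bullet> ev l2)" using ev[OF l(2)] by simp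
    finally show "ev l1 \<bullet> ev l2 = 0" using ne by simp
  qed
  have "0 \<notin> ev ` L" using ev by auto
  then have "independent (ev ` L)" using orth pairwise_orthogonal_independent by blast
  then have "finite (ev ` L)" by (rule finiteI_independent)
  then show ?thesis using inj finite_imageD unfolding L_def by blast
qed

lemma lambda_min_ge:
  fixes H :: "real^'n^'n"
  assumes sym: "\<And>i j. H$i$j = H$j$i"
    and K: "(\<Sum>i\<in>UNIV. \<Sum>j\<in>UNIV. \<bar>H$i$j\<bar>) \<le> K"
  shows "lambda_min H \<ge> - K"
proof -
  let ?L = "{l. \<exists>v. v \<noteq> 0 \<and> H *v v = l *\<^sub>R v}"
  have "finite ?L" by (rule sym_eig_finite[OF sym])
  moreover have "?L \<noteq> {}" using sym_has_eig[OF sym] by auto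
  moreover have "\<forall>l\<in>?L. - K \<le> l"
    using eig_bound K by fastforce
  ultimately show ?thesis unfolding lambda_min_def by simp
qed

lemma integrable_gauss_1d:
  assumes "a > 0"
  shows "integrable lborel (\<lambda>t::real. exp (- a * t\<^sup>2))"
proof -
  define s where "s = sqrt (1 / (2 * a))"
  have s_pos: "s > 0" using assms by (simp add: s_def)
  have s2: "2 * s\<^sup>2 = 1 / a" using assms by (simp add: s_def)
  have eq: "exp (- a * t\<^sup>2) = sqrt (2 * pi * s\<^sup>2) * normal_density 0 s t" for t
  proof -
    have "- ((t - 0)\<^sup>2) / (2 * s\<^sup>2) = - a * t\<^sup>2" by (subst s2) simp
    moreover have sq: "sqrt (2 * pi * s\<^sup>2) > 0" using s_pos pi_gt_zero by (intro real_sqrt_gt_zero mult_pos_pos) auto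
    moreover have "sqrt (2 * pi * s\<^sup>2) * normal_density 0 s t = exp (- ((t - 0)\<^sup>2) / (2 * s\<^sup>2))"
      using sq s_pos unfolding normal_density_def by (simp add: less_imp_neq[OF s_pos, symmetric])
    ultimately show ?thesis by simp
  qed
  show ?thesis unfolding eq using s_pos by (auto intro!: integrable_mult_right integrable_normal_density)
qed

lemma integrable_gauss:
  assumes "a > 0"
  shows "integrable lborel (\<lambda>v::'a::euclidean_space. exp (- a * (norm v)\<^sup>2))"
proof (subst integrable_iff_bounded, intro conjI)
  show "(\<lambda>v::'a. exp (- a * (norm v)\<^sup>2)) \<in> borel_measurable lborel" by measurable
  have eq: "exp (- a * (norm v)\<^sup>2) = (\<Prod>b\<in>Basis. exp (- a * (v \<bullet> b)\<^sup>2))" for v :: 'a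
  proof -
    have "(norm v)\<^sup>2 = v \<bullet> v" by (simp add: power2_norm_eq_inner)
    also have "\<dots> = (\<Sum>b\<in>Basis. (v \<bullet> b) * (v \<bullet> b))" by (rule euclidean_inner)
    finally have "(norm v)\<^sup>2 = (\<Sum>b\<in>Basis. (v \<bullet> b)\<^sup>2)" by (simp add: power2_eq_square)
    then have "- a * (norm v)\<^sup>2 = (\<Sum>b\<in>Basis. - a * (v \<bullet> b)\<^sup>2)" by (simp add: sum_distrib_left)
    then show ?thesis by (simp add: exp_sum)
  qed
  have "(\<integral>\<^sup>+ v. ennreal (norm (exp (- a * (norm v)\<^sup>2))) \<partial>(lborel::'a measure))
        = (\<integral>\<^sup>+ v. (\<Prod>b\<in>Basis. ennreal (exp (- a * (v \<bullet> b)\<^sup>2))) \<partial>(lborel::'a measure))"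
    apply (intro nn_integral_cong)
    apply (simp only: eq)
    apply (simp add: prod_ennreal abs_prod)
    done
  also have "\<dots> = (\<Prod>b\<in>(Basis::'a set). (\<integral>\<^sup>+ t. ennreal (exp (- a * t\<^sup>2)) \<partial>lborel))"
    by (rule nn_integral_lborel_prod) auto
  also have "\<dots> < \<infinity>"
  proof -
    have "(\<integral>\<^sup>+ t. ennreal (exp (- a * t\<^sup>2)) \<partial>lborel) < \<infinity>"
      using integrable_gauss_1d[OF assms] by (simp add: integrable_iff_bounded)
    then show ?thesis by (simp add: less_top[symmetric] ennreal_prod_eq_top power_eq_top_ennreal)
  qed
  finally show "(\<integral>\<^sup>+ v. ennreal (norm (exp (- a * (norm v)\<^sup>2))) \<partial>(lborel::'a measure)) < \<infinity>" .
qed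

lemma lborel_translate:
  fixes f :: "'a::euclidean_space \<Rightarrow> real"
  assumes "integrable lborel f"
  shows "integrable lborel (\<lambda>w. f (w + c))" and "(\<integral>w. f (w + c) \<partial>lborel) = (\<integral>w. f w \<partial>lborel)"
proof -
  have m: "f \<in> borel_measurable borel" using assms by (simp add: borel_measurable_integrable)
  have "integrable (distr lborel borel ((+) c)) f" using assms by (simp add: lborel_distr_plus)
  then have "integrable lborel (\<lambda>w. f (c + w))" by (subst (asm) integrable_distr_eq) (use m in auto)
  then show "integrable lborel (\<lambda>w. f (w + c))" by (simp add: add.commute)
  have "(\<integral>w. f w \<partial>lborel) = (\<integral>w. f w \<partial>(distr lborel borel ((+) c)))" by (simp add: lborel_distr_plus)
  also have "\<dots> = (\<integral>w. f (c + w) \<partial>lborel)" by (rule integral_distr) (use m in auto)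
  finally show "(\<integral>w. f (w + c) \<partial>lborel) = (\<integral>w. f w \<partial>lborel)" by (simp add: add.commute)
qed

definition gE :: "real^'n \<Rightarrow> real" where "gE v = exp (- (norm v)\<^sup>2 / 2)"
definition PB :: "real^'n \<Rightarrow> real" where "PB v = 200 * exp (- (norm v)\<^sup>2 / 8)"

lemma poly_gauss:
  fixes r :: real assumes r: "r \<ge> 0"
  shows "(r^3 + r\<^sup>2 + 3*r + 1) * exp (- r\<^sup>2 / 2) \<le> 100 * exp (- r\<^sup>2 / 4)"
proof -
  have e1: "1 + r\<^sup>2/8 \<le> exp (r\<^sup>2/8)" using exp_ge_add_one_self by simp
  have "exp (r\<^sup>2/4) = exp (r\<^sup>2/8) * exp (r\<^sup>2/8)" by (simp flip: exp_add)
  moreover have "(1 + r\<^sup>2/8) * (1 + r\<^sup>2/8) \<le> exp (r\<^sup>2/8) * exp (r\<^sup>2/8)"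
    using e1 by (intro mult_mono) auto
  ultimately have e2: "(1 + r\<^sup>2/8)\<^sup>2 \<le> exp (r\<^sup>2/4)" by (simp add: power2_eq_square)
  have a1: "r^3 \<le> r^4/2 + r\<^sup>2/2"
  proof -
    have "0 \<le> r\<^sup>2 * (r - 1)\<^sup>2" by simp
    then show ?thesis by (simp add: power2_eq_square power3_eq_cube power4_eq_xxxx algebra_simps)
  qed
  have a2: "3 * r \<le> 3/2 + 3/2 * r\<^sup>2"
  proof -
    have "0 \<le> (r - 1)\<^sup>2" by simp
    then show ?thesis by (simp add: power2_eq_square algebra_simps)
  qed
  have eq: "(1 + r\<^sup>2/8)\<^sup>2 = 1 + r\<^sup>2/4 + r^4/64" by (simp add: power2_eq_square power4_eq_xxxx algebra_simps)
  have r4: "0 \<le> r^4" using r by simp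
  have r2: "0 \<le> r\<^sup>2" by simp
  have p: "r^3 + r\<^sup>2 + 3*r + 1 \<le> 100 * (1 + r\<^sup>2/8)\<^sup>2"
  proof -
    have "r^3 + r\<^sup>2 + 3*r + 1 \<le> 100 + 25 * r\<^sup>2 + (25/16) * r^4" using a1 a2 r4 r2 by linarith
    moreover have "100 * (1 + r\<^sup>2/4 + r^4/64) = 100 + 25 * r\<^sup>2 + (25/16) * r^4" by simp
    ultimately show ?thesis unfolding eq by linarith
  qed
  have "(r^3 + r\<^sup>2 + 3*r + 1) * exp (- r\<^sup>2 / 2) \<le> 100 * exp (r\<^sup>2/4) * exp (- r\<^sup>2 / 2)"
    using p e2 by (intro mult_right_mono) auto
  also have "\<dots> = 100 * exp (- r\<^sup>2 / 4)" by (simp add: mult.assoc flip: exp_add)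
  finally show ?thesis .
qed

lemma taylor2:
  fixes f f1 f2 :: "real \<Rightarrow> real"
  assumes d1: "\<And>t. 0 \<le> t \<Longrightarrow> t \<le> 1 \<Longrightarrow> (f has_real_derivative f1 t) (at t)"
    and d2: "\<And>t. 0 \<le> t \<Longrightarrow> t \<le> 1 \<Longrightarrow> (f1 has_real_derivative f2 t) (at t)"
    and M: "\<And>t. 0 \<le> t \<Longrightarrow> t \<le> 1 \<Longrightarrow> \<bar>f2 t\<bar> \<le> M"
  shows "\<bar>f 1 - f 0 - f1 0\<bar> \<le> M / 2"
proof -
  define diff where "diff m = (if m = 0 then f else if m = 1 then f1 else f2)" for m :: nat
  have "\<exists>t::real. 0 < t \<and> t < 1 \<and>
      f 1 = sum (\<lambda>m. (diff m 0 / fact m) * 1 ^ m) {..<2} + (diff 2 t / fact 2) * 1 ^ 2"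
  proof (rule Maclaurin)
    show "\<forall>m t. m < 2 \<and> 0 \<le> t \<and> t \<le> 1 \<longrightarrow> (diff m has_real_derivative diff (Suc m) t) (at t)"
    proof (intro allI impI)
      fix m :: nat and t :: real assume "m < 2 \<and> 0 \<le> t \<and> t \<le> 1"
      then have "m = 0 \<or> m = 1" "0 \<le> t" "t \<le> 1" by auto
      then show "(diff m has_real_derivative diff (Suc m) t) (at t)"
        using d1 d2 by (auto simp: diff_def)
    qed
  qed (auto simp: diff_def)
  then obtain t where t: "0 < t" "t < 1" "f 1 = f 0 + f1 0 + f2 t / 2"
    by (auto simp: diff_def numeral_2_eq_2 lessThan_Suc)
  then show ?thesis using M[of t] by auto
qed

lemma norm_diff_sq:
  fixes v s :: "real^'n"
  shows "(norm (v - t *\<^sub>R s))\<^sup>2 = v \<bullet> v - 2 * t * (v \<bullet> s) + t\<^sup>2 * (s \<bullet> s)"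
  unfolding power2_norm_eq_inner by (simp add: inner_diff_left inner_diff_right inner_commute power2_eq_square algebra_simps)

lemma gE_line: "gE (v - t *\<^sub>R s) = exp (- (v \<bullet> v - 2 * t * (v \<bullet> s) + t\<^sup>2 * (s \<bullet> s)) / 2)"
  by (simp add: gE_def norm_diff_sq)

lemma u_bound:
  fixes v s :: "real^'n"
  assumes "norm s \<le> 1" "0 \<le> t" "t \<le> 1"
  shows "exp (- (norm (v - t *\<^sub>R s))\<^sup>2 / 4) \<le> exp (1/4) * exp (- (norm v)\<^sup>2 / 8)"
proof -
  let ?u = "v - t *\<^sub>R s"
  have "norm (t *\<^sub>R s) \<le> 1" using assms by (simp add: mult_le_one)
  then have "norm v \<le> norm ?u + 1" using norm_triangle_ineq[of ?u "t *\<^sub>R s"] by simp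
  then have "(norm v)\<^sup>2 \<le> (norm ?u + 1)\<^sup>2" by (intro power_mono) auto
  also have "\<dots> \<le> 2 * (norm ?u)\<^sup>2 + 2"
    using sum_squares_ge_zero[of "norm ?u - 1" 0]
    by (simp add: power2_eq_square algebra_simps)
  finally have "- (norm ?u)\<^sup>2 / 4 \<le> 1/4 + - (norm v)\<^sup>2 / 8" by simp
  then show ?thesis by (simp flip: exp_add)
qed


lemma de_line:
  "((\<lambda>t. exp (- (a - 2 * t * b + t\<^sup>2 * c) / 2)) has_real_derivative
     (b - c * t) * exp (- (a - 2 * t * b + t\<^sup>2 * c) / 2)) (at t)"
  by (auto intro!: derivative_eq_intros simp: field_simps)

lemma pe_bound:
  fixes v s :: "real^'n"
  assumes "norm s \<le> 1" "0 \<le> t" "t \<le> 1"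
  shows "((norm (v - t *\<^sub>R s))^3 + (norm (v - t *\<^sub>R s))\<^sup>2 + 3 * norm (v - t *\<^sub>R s) + 1) * gE (v - t *\<^sub>R s)
         \<le> 100 * exp (1/4) * exp (- (norm v)\<^sup>2 / 8)"
proof -
  have "((norm (v - t *\<^sub>R s))^3 + (norm (v - t *\<^sub>R s))\<^sup>2 + 3 * norm (v - t *\<^sub>R s) + 1) * gE (v - t *\<^sub>R s)
        \<le> 100 * exp (- (norm (v - t *\<^sub>R s))\<^sup>2 / 4)"
    unfolding gE_def by (rule poly_gauss) simp
  also have "\<dots> \<le> 100 * (exp (1/4) * exp (- (norm v)\<^sup>2 / 8))"
    using u_bound[OF assms] by simp
  finally show ?thesis by simp
qed

lemma half_bound:
  assumes "0 \<le> x"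
  shows "x * (100 * exp (1/4) * exp (- (norm v)\<^sup>2 / 8)) / 2 \<le> x * PB v"
proof -
  have "exp (1/4::real) \<le> exp 1" by simp
  also have "\<dots> \<le> 3" by (rule exp_le)
  finally have "100 * exp (1/4::real) / 2 \<le> 200" by simp
  then have "100 * exp (1/4) * exp (- (norm v)\<^sup>2 / 8) / 2 \<le> 200 * exp (- (norm v)\<^sup>2 / 8)"
    by (metis mult_right_mono exp_ge_zero times_divide_eq_left mult.commute mult.left_commute)
  then show ?thesis unfolding PB_def using assms
    by (metis mult_left_mono times_divide_eq_right)
qed

lemma TB1:
  fixes v s :: "real^'n"
  assumes s1: "norm s \<le> 1"
  shows "\<bar>gE (v - s) - gE v - gE v * (v \<bullet> s)\<bar> \<le> (norm s)\<^sup>2 * PB v"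
proof -
  define a where "a = v \<bullet> v"
  define b where "b = v \<bullet> s"
  define c where "c = s \<bullet> s"
  define e where "e t = exp (- (a - 2 * t * b + t\<^sup>2 * c) / 2)" for t
  have ge: "gE (v - t *\<^sub>R s) = e t" for t by (simp add: gE_line e_def a_def b_def c_def)
  have bc: "b - c * t = (v - t *\<^sub>R s) \<bullet> s" for t
    by (simp add: b_def c_def inner_diff_left)
  have cs: "c = (norm s)\<^sup>2" by (simp add: c_def power2_norm_eq_inner)
  define M where "M = (norm s)\<^sup>2 * (100 * exp (1/4) * exp (- (norm v)\<^sup>2 / 8))"
  have "\<bar>e 1 - e 0 - (b - c * 0) * e 0\<bar> \<le> M / 2"
  proof (rule taylor2)
    fix t :: real
    show "(e has_real_derivative (b - c * t) * e t) (at t)" unfolding e_def by (rule de_line)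
    show "((\<lambda>t. (b - c * t) * e t) has_real_derivative ((b - c * t)\<^sup>2 - c) * e t) (at t)"
      unfolding e_def by (auto intro!: derivative_eq_intros de_line simp: power2_eq_square field_simps)
    assume t: "0 \<le> t" "t \<le> 1"
    let ?u = "v - t *\<^sub>R s"
    have X: "\<bar>b - c * t\<bar> \<le> norm ?u * norm s" unfolding bc by (rule Cauchy_Schwarz_ineq2)
    have "\<bar>((b - c * t)\<^sup>2 - c) * e t\<bar> \<le> ((norm ?u * norm s)\<^sup>2 + (norm s)\<^sup>2) * e t"
    proof -
      have "(b - c * t)\<^sup>2 \<le> (norm ?u * norm s)\<^sup>2" using X by (metis abs_ge_zero power2_abs power_mono)
      moreover have "0 \<le> (b - c * t)\<^sup>2" by simp
      moreover have "e t > 0" by (simp add: e_def)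
      moreover have "0 \<le> (norm s)\<^sup>2" by simp
      ultimately have A: "\<bar>(b - c * t)\<^sup>2 - c\<bar> \<le> (norm ?u * norm s)\<^sup>2 + (norm s)\<^sup>2"
        using cs unfolding abs_le_iff by (intro conjI) linarith+
      have "\<bar>((b - c * t)\<^sup>2 - c) * e t\<bar> = \<bar>(b - c * t)\<^sup>2 - c\<bar> * e t"
        using \<open>e t > 0\<close> by (simp add: abs_mult)
      also have "\<dots> \<le> ((norm ?u * norm s)\<^sup>2 + (norm s)\<^sup>2) * e t"
        using A \<open>e t > 0\<close> by (intro mult_right_mono) auto
      finally show ?thesis .
    qed
    also have "\<dots> = (norm s)\<^sup>2 * ((norm ?u)\<^sup>2 + 1) * gE ?u" by (simp add: ge power2_eq_square algebra_simps)
    also have "\<dots> \<le> (norm s)\<^sup>2 * (((norm ?u)^3 + (norm ?u)\<^sup>2 + 3 * norm ?u + 1) * gE ?u)"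
    proof -
      have "(norm ?u)\<^sup>2 + 1 \<le> (norm ?u)^3 + (norm ?u)\<^sup>2 + 3 * norm ?u + 1" by simp
      moreover have "gE ?u \<ge> 0" by (simp add: gE_def)
      ultimately show ?thesis by (metis mult.assoc mult_left_mono mult_right_mono zero_le_power2)
    qed
    also have "\<dots> \<le> M" unfolding M_def using pe_bound[OF s1 t] by (intro mult_left_mono) auto
    finally show "\<bar>((b - c * t)\<^sup>2 - c) * e t\<bar> \<le> M" .
  qed
  moreover have "e 1 = gE (v - s)" using ge[of 1] by simp
  moreover have "e 0 = gE v" using ge[of 0] by simp
  moreover have "M / 2 \<le> (norm s)\<^sup>2 * PB v" unfolding M_def by (rule half_bound) simp
  ultimately show ?thesis by (simp add: b_def mult.commute)
qed


lemma TB2: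
  fixes v s :: "real^'n"
  assumes s1: "norm s \<le> 1"
  shows "\<bar>gE (v - s) * (v - s)$j - gE v * v$j - gE v * ((v \<bullet> s) * v$j - s$j)\<bar> \<le> (norm s)\<^sup>2 * PB v"
proof -
  define a where "a = v \<bullet> v"
  define b where "b = v \<bullet> s"
  define c where "c = s \<bullet> s"
  define al where "al = v$j"
  define be where "be = s$j"
  define e where "e t = exp (- (a - 2 * t * b + t\<^sup>2 * c) / 2)" for t
  have ge: "gE (v - t *\<^sub>R s) = e t" for t by (simp add: gE_line e_def a_def b_def c_def)
  have bc: "b - c * t = (v - t *\<^sub>R s) \<bullet> s" for t
    by (simp add: b_def c_def inner_diff_left)
  have ab: "al - t * be = (v - t *\<^sub>R s)$j" for t by (simp add: al_def be_def)
  have cs: "c = (norm s)\<^sup>2" by (simp add: c_def power2_norm_eq_inner)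
  define M where "M = (norm s)\<^sup>2 * (100 * exp (1/4) * exp (- (norm v)\<^sup>2 / 8))"
  have "\<bar>e 1 * (al - 1 * be) - e 0 * (al - 0 * be) - ((b - c * 0) * e 0 * (al - 0 * be) - be * e 0)\<bar> \<le> M / 2"
  proof (rule taylor2)
    fix t :: real
    show "((\<lambda>t. e t * (al - t * be)) has_real_derivative (b - c * t) * e t * (al - t * be) - be * e t) (at t)"
      unfolding e_def by (auto intro!: derivative_eq_intros de_line simp: field_simps)
    show "((\<lambda>t. (b - c * t) * e t * (al - t * be) - be * e t) has_real_derivative
            (((b - c * t)\<^sup>2 - c) * (al - t * be) - 2 * be * (b - c * t)) * e t) (at t)"
      unfolding e_def by (auto intro!: derivative_eq_intros de_line simp: power2_eq_square field_simps)
    assume t: "0 \<le> t" "t \<le> 1"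
    let ?u = "v - t *\<^sub>R s"
    have X: "\<bar>b - c * t\<bar> \<le> norm ?u * norm s" unfolding bc by (rule Cauchy_Schwarz_ineq2)
    have Y: "\<bar>al - t * be\<bar> \<le> norm ?u" unfolding ab by (rule component_le_norm_cart)
    have Bt: "\<bar>be\<bar> \<le> norm s" unfolding be_def by (rule component_le_norm_cart)
    have et: "e t > 0" by (simp add: e_def)
    have A: "\<bar>(b - c * t)\<^sup>2 - c\<bar> \<le> (norm ?u * norm s)\<^sup>2 + (norm s)\<^sup>2"
    proof -
      have "(b - c * t)\<^sup>2 \<le> (norm ?u * norm s)\<^sup>2" using X by (metis abs_ge_zero power2_abs power_mono)
      moreover have "0 \<le> (b - c * t)\<^sup>2" by simp
      moreover have "0 \<le> (norm s)\<^sup>2" by simp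
      ultimately show ?thesis using cs unfolding abs_le_iff by (intro conjI) linarith+
    qed
    have "\<bar>((b - c * t)\<^sup>2 - c) * (al - t * be) - 2 * be * (b - c * t)\<bar>
          \<le> \<bar>(b - c * t)\<^sup>2 - c\<bar> * \<bar>al - t * be\<bar> + 2 * (\<bar>be\<bar> * \<bar>b - c * t\<bar>)"
      by (metis (no_types, opaque_lifting) abs_mult abs_triangle_ineq4 abs_numeral mult.assoc)
    also have "\<dots> \<le> ((norm ?u * norm s)\<^sup>2 + (norm s)\<^sup>2) * norm ?u + 2 * (norm s * (norm ?u * norm s))"
      using A Y Bt X by (intro add_mono mult_left_mono mult_mono) auto
    also have "\<dots> = (norm s)\<^sup>2 * ((norm ?u)^3 + 3 * norm ?u)"
      by (simp add: power2_eq_square power3_eq_cube algebra_simps)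
    also have "\<dots> \<le> (norm s)\<^sup>2 * ((norm ?u)^3 + (norm ?u)\<^sup>2 + 3 * norm ?u + 1)"
      by (intro mult_left_mono) auto
    finally have F: "\<bar>((b - c * t)\<^sup>2 - c) * (al - t * be) - 2 * be * (b - c * t)\<bar>
          \<le> (norm s)\<^sup>2 * ((norm ?u)^3 + (norm ?u)\<^sup>2 + 3 * norm ?u + 1)" .
    have "\<bar>(((b - c * t)\<^sup>2 - c) * (al - t * be) - 2 * be * (b - c * t)) * e t\<bar>
       = \<bar>((b - c * t)\<^sup>2 - c) * (al - t * be) - 2 * be * (b - c * t)\<bar> * e t"
      using et by (simp add: abs_mult)
    also have "\<dots> \<le> (norm s)\<^sup>2 * ((norm ?u)^3 + (norm ?u)\<^sup>2 + 3 * norm ?u + 1) * gE ?u"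
      unfolding ge[of t] using F et by (intro mult_right_mono) auto
    also have "\<dots> \<le> M" unfolding M_def using pe_bound[OF s1 t]
      by (simp add: mult.assoc mult_left_mono)
    finally show "\<bar>(((b - c * t)\<^sup>2 - c) * (al - t * be) - 2 * be * (b - c * t)) * e t\<bar> \<le> M" .
  qed
  moreover have "e 1 = gE (v - s)" using ge[of 1] by simp
  moreover have "e 0 = gE v" using ge[of 0] by simp
  moreover have "M / 2 \<le> (norm s)\<^sup>2 * PB v" unfolding M_def by (rule half_bound) simp
  moreover have "al - 1 * be = (v - s)$j" by (simp add: al_def be_def)
  ultimately show ?thesis by (simp add: b_def al_def be_def algebra_simps)
qed

lemma int_shift_bound:
  fixes g :: "real^'n \<Rightarrow> real" and q :: "real^'n \<Rightarrow> real" and P :: "real^'n \<Rightarrow> real"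
  assumes gm: "g \<in> borel_measurable borel" and gB: "\<And>y. \<bar>g y\<bar> \<le> B"
    and qm: "q \<in> borel_measurable borel"
    and Pint: "integrable lborel P" and qP: "\<And>v. \<bar>q v\<bar> \<le> P v"
  shows "integrable lborel (\<lambda>w. g (\<sigma> *\<^sub>R w) * q (w - a))"
proof (rule Bochner_Integration.integrable_bound)
  show "integrable lborel (\<lambda>w. B * P (w + (- a)))"
    by (intro integrable_mult_right lborel_translate(1) Pint)
  show "(\<lambda>w. g (\<sigma> *\<^sub>R w) * q (w - a)) \<in> borel_measurable lborel"
    using gm qm by measurable
  have B0: "0 \<le> B" using gB[of 0] abs_ge_zero[of "g 0"] by linarith
  show "AE w in lborel. norm (g (\<sigma> *\<^sub>R w) * q (w - a)) \<le> norm (B * P (w + (- a)))"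
  proof (intro AE_I2)
    fix w
    have P0: "0 \<le> P (w - a)" using qP[of "w - a"] abs_ge_zero[of "q (w - a)"] by linarith
    have "norm (g (\<sigma> *\<^sub>R w) * q (w - a)) = \<bar>g (\<sigma> *\<^sub>R w)\<bar> * \<bar>q (w - a)\<bar>" by (simp add: abs_mult)
    also have "\<dots> \<le> B * P (w - a)" using gB qP B0 by (intro mult_mono) auto
    also have "\<dots> = norm (B * P (w + (- a)))" using B0 P0 by simp
    finally show "norm (g (\<sigma> *\<^sub>R w) * q (w - a)) \<le> norm (B * P (w + (- a)))" .
  qed
qed


lemma KL:
  fixes g :: "real^'n \<Rightarrow> real" and k :: "real^'n \<Rightarrow> real" and dk :: "real^'n \<Rightarrow> real^'n"
    and P :: "real^'n \<Rightarrow> real"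
  assumes gm: "g \<in> borel_measurable borel" and gB: "\<And>y. \<bar>g y\<bar> \<le> B" and sg: "\<sigma> > 0"
    and km: "k \<in> borel_measurable borel" and dkm: "\<And>i. (\<lambda>v. dk v $ i) \<in> borel_measurable borel"
    and Pint: "integrable lborel P"
    and kP: "\<And>v. \<bar>k v\<bar> \<le> P v" and dkP: "\<And>v i. \<bar>dk v $ i\<bar> \<le> P v"
    and tay: "\<And>v s. norm s \<le> 1 \<Longrightarrow> \<bar>k (v - s) - k v + dk v \<bullet> s\<bar> \<le> (norm s)\<^sup>2 * P v"
  shows "((\<lambda>x. \<integral>w. g (\<sigma> *\<^sub>R w) * k (w - (1/\<sigma>) *\<^sub>R x) \<partial>lborel) has_derivative
          (\<lambda>h. (\<chi> i. - (1/\<sigma>) * (\<integral>w. g (\<sigma> *\<^sub>R w) * (dk (w - (1/\<sigma>) *\<^sub>R x0) $ i) \<partial>lborel)) \<bullet> h)) (at x0)"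
proof -
  define T where "T x = (\<integral>w. g (\<sigma> *\<^sub>R w) * k (w - (1/\<sigma>) *\<^sub>R x) \<partial>lborel)" for x
  define D where "D = (\<chi> i. - (1/\<sigma>) * (\<integral>w. g (\<sigma> *\<^sub>R w) * (dk (w - (1/\<sigma>) *\<^sub>R x0) $ i) \<partial>lborel))"
  define a0 where "a0 = (1/\<sigma>) *\<^sub>R x0"
  define IP where "IP = (\<integral>w. P (w - a0) \<partial>lborel)"
  have B0: "0 \<le> B" using gB[of 0] abs_ge_zero[of "g 0"] by linarith
  have P0: "0 \<le> P v" for v using kP[of v] abs_ge_zero[of "k v"] by linarith
  have Pm: "P \<in> borel_measurable borel" using Pint by (simp add: borel_measurable_integrable)
  have IntK: "integrable lborel (\<lambda>w. g (\<sigma> *\<^sub>R w) * k (w - a))" for a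
    by (rule int_shift_bound[OF gm gB km Pint kP])
  have IntD: "integrable lborel (\<lambda>w. g (\<sigma> *\<^sub>R w) * (dk (w - a) $ i))" for a i
    by (rule int_shift_bound[OF gm gB dkm Pint dkP])
  have IntP: "integrable lborel (\<lambda>w. P (w - a))" for a
    using lborel_translate(1)[OF Pint, of "- a"] by simp
  have IP0: "0 \<le> IP" unfolding IP_def using P0 by (intro integral_nonneg_AE) auto
  have main: "\<bar>T x - T x0 - D \<bullet> (x - x0)\<bar> \<le> (B * IP / \<sigma>\<^sup>2) * (norm (x - x0))\<^sup>2"
    if xr: "norm (x - x0) \<le> \<sigma>" for x
  proof -
    define s where "s = (1/\<sigma>) *\<^sub>R (x - x0)"
    have ns: "norm s = norm (x - x0) / \<sigma>" using sg by (simp add: s_def)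
    have s1: "norm s \<le> 1" using xr sg by (simp add: ns)
    have shift: "w - (1/\<sigma>) *\<^sub>R x = (w - a0) - s" for w
      by (simp add: s_def a0_def scaleR_diff_right algebra_simps)
    have Ds: "D \<bullet> (x - x0) = - (\<integral>w. g (\<sigma> *\<^sub>R w) * (dk (w - a0) \<bullet> s) \<partial>lborel)"
    proof -
      have "(\<integral>w. g (\<sigma> *\<^sub>R w) * (dk (w - a0) \<bullet> s) \<partial>lborel)
          = (\<integral>w. (\<Sum>i\<in>UNIV. g (\<sigma> *\<^sub>R w) * (dk (w - a0) $ i) * s $ i) \<partial>lborel)"
        by (simp add: inner_vec_def sum_distrib_left mult.assoc)
      also have "\<dots> = (\<Sum>i\<in>UNIV. (\<integral>w. g (\<sigma> *\<^sub>R w) * (dk (w - a0) $ i) * s $ i \<partial>lborel))"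
        by (rule Bochner_Integration.integral_sum) (intro integrable_mult_left IntD)
      also have "\<dots> = (\<Sum>i\<in>UNIV. (\<integral>w. g (\<sigma> *\<^sub>R w) * (dk (w - a0) $ i) \<partial>lborel) * s $ i)"
        by simp
      finally have "(\<integral>w. g (\<sigma> *\<^sub>R w) * (dk (w - a0) \<bullet> s) \<partial>lborel)
          = (\<Sum>i\<in>UNIV. (\<integral>w. g (\<sigma> *\<^sub>R w) * (dk (w - a0) $ i) \<partial>lborel) * s $ i)" .
      moreover have "D \<bullet> (x - x0) = - (\<Sum>i\<in>UNIV. (\<integral>w. g (\<sigma> *\<^sub>R w) * (dk (w - a0) $ i) \<partial>lborel) * s $ i)"
        using sg by (simp add: D_def a0_def s_def inner_vec_def sum_negf flip: sum_divide_distrib)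
      ultimately show ?thesis by simp
    qed
    have IntDs: "integrable lborel (\<lambda>w. g (\<sigma> *\<^sub>R w) * (dk (w - a0) \<bullet> s))"
    proof -
      have "integrable lborel (\<lambda>w. (\<Sum>i\<in>UNIV. g (\<sigma> *\<^sub>R w) * (dk (w - a0) $ i) * s $ i))"
        by (intro Bochner_Integration.integrable_sum integrable_mult_left IntD)
      then show ?thesis by (simp add: inner_vec_def sum_distrib_left mult.assoc)
    qed
    have "T x - T x0 - D \<bullet> (x - x0)
        = (\<integral>w. g (\<sigma> *\<^sub>R w) * k (w - (1/\<sigma>) *\<^sub>R x) - g (\<sigma> *\<^sub>R w) * k (w - a0)
             + g (\<sigma> *\<^sub>R w) * (dk (w - a0) \<bullet> s) \<partial>lborel)"
      unfolding Ds T_def a0_def[symmetric]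
      using IntK[of "(1/\<sigma>) *\<^sub>R x"] IntK[of a0] IntDs by simp
    also have "\<dots> = (\<integral>w. g (\<sigma> *\<^sub>R w) * (k ((w - a0) - s) - k (w - a0) + dk (w - a0) \<bullet> s) \<partial>lborel)"
      by (intro Bochner_Integration.integral_cong refl) (simp only: shift right_diff_distrib distrib_left)
    finally have eq: "T x - T x0 - D \<bullet> (x - x0)
        = (\<integral>w. g (\<sigma> *\<^sub>R w) * (k ((w - a0) - s) - k (w - a0) + dk (w - a0) \<bullet> s) \<partial>lborel)" .
    have intR: "integrable lborel (\<lambda>w. g (\<sigma> *\<^sub>R w) * (k ((w - a0) - s) - k (w - a0) + dk (w - a0) \<bullet> s))"
    proof -
      have "integrable lborel (\<lambda>w. g (\<sigma> *\<^sub>R w) * k (w - (1/\<sigma>) *\<^sub>R x) - g (\<sigma> *\<^sub>R w) * k (w - a0)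
             + g (\<sigma> *\<^sub>R w) * (dk (w - a0) \<bullet> s))"
        using IntK IntDs by auto
      then show ?thesis by (simp only: shift right_diff_distrib distrib_left)
    qed
    have "\<bar>T x - T x0 - D \<bullet> (x - x0)\<bar>
        \<le> (\<integral>w. norm (g (\<sigma> *\<^sub>R w) * (k ((w - a0) - s) - k (w - a0) + dk (w - a0) \<bullet> s)) \<partial>lborel)"
      unfolding eq real_norm_def[symmetric] by (rule integral_norm_bound)
    also have "\<dots> \<le> (\<integral>w. B * ((norm s)\<^sup>2 * P (w - a0)) \<partial>lborel)"
    proof (rule integral_mono)
      show "integrable lborel (\<lambda>w. norm (g (\<sigma> *\<^sub>R w) * (k ((w - a0) - s) - k (w - a0) + dk (w - a0) \<bullet> s)))"
        using intR by (rule integrable_norm)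
      show "integrable lborel (\<lambda>w. B * ((norm s)\<^sup>2 * P (w - a0)))"
        by (intro integrable_mult_right IntP)
      fix w
      show "norm (g (\<sigma> *\<^sub>R w) * (k ((w - a0) - s) - k (w - a0) + dk (w - a0) \<bullet> s)) \<le> B * ((norm s)\<^sup>2 * P (w - a0))"
        unfolding real_norm_def abs_mult using gB tay[OF s1, of "w - a0"] B0
        by (intro mult_mono) auto
    qed
    also have "\<dots> = B * (norm s)\<^sup>2 * IP" by (simp add: IP_def)
    also have "\<dots> = (B * IP / \<sigma>\<^sup>2) * (norm (x - x0))\<^sup>2" by (simp add: ns power_divide)
    finally show ?thesis .
  qed
  have "(T has_derivative (\<lambda>h. D \<bullet> h)) (at x0)"
    unfolding has_derivative_at'
  proof (intro conjI allI impI)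
    show "bounded_linear (\<lambda>h. D \<bullet> h)" by (rule bounded_linear_inner_right)
    fix e :: real assume e: "e > 0"
    define C where "C = B * IP / \<sigma>\<^sup>2"
    have C0: "0 \<le> C" using B0 IP0 by (simp add: C_def)
    define d where "d = min \<sigma> (e / (C + 1))"
    have d: "d > 0" using sg e C0 by (simp add: d_def)
    show "\<exists>d>0. \<forall>x'. 0 < norm (x' - x0) \<and> norm (x' - x0) < d \<longrightarrow>
          norm (T x' - T x0 - D \<bullet> (x' - x0)) / norm (x' - x0) < e"
    proof (intro exI[of _ d] conjI allI impI d)
      fix x' assume x': "0 < norm (x' - x0) \<and> norm (x' - x0) < d"
      then have n0: "0 < norm (x' - x0)" and nd: "norm (x' - x0) < d" by auto
      have "norm (x' - x0) \<le> \<sigma>" using nd by (simp add: d_def)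
      then have "\<bar>T x' - T x0 - D \<bullet> (x' - x0)\<bar> \<le> C * (norm (x' - x0))\<^sup>2" unfolding C_def by (rule main)
      then have "norm (T x' - T x0 - D \<bullet> (x' - x0)) / norm (x' - x0) \<le> C * norm (x' - x0)"
        using n0 by (simp add: divide_le_eq power2_eq_square mult.assoc)
      also have "\<dots> \<le> C * (e / (C + 1))" using nd C0 by (intro mult_left_mono) (auto simp: d_def)
      also have "\<dots> < e" using C0 e by (simp add: field_simps)
      finally show "norm (T x' - T x0 - D \<bullet> (x' - x0)) / norm (x' - x0) < e" .
    qed
  qed
  then show ?thesis unfolding T_def D_def .
qed

definition poly3 :: "real \<Rightarrow> real" where "poly3 r = r^3 + r\<^sup>2 + 3 * r + 1"

lemma poly3_ge: "r \<ge> 0 \<Longrightarrow> 1 \<le> poly3 r" "r \<ge> 0 \<Longrightarrow> r \<le> poly3 r" "1 + r\<^sup>2 \<le> poly3 r \<or> r < 0"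
  by (auto simp: poly3_def)

lemma gE_pos: "gE v > 0" by (simp add: gE_def)

lemma gE_poly4: "gE v * poly3 (norm v) \<le> 100 * exp (- (norm v)\<^sup>2 / 4)"
  using poly_gauss[of "norm v"] by (simp add: gE_def poly3_def mult.commute)

lemma gE_PB: "gE v * poly3 (norm v) \<le> PB v"
proof -
  have "exp (- (norm v)\<^sup>2 / 4) \<le> exp (- (norm v)\<^sup>2 / 8)" by simp
  moreover have "0 \<le> exp (- (norm v)\<^sup>2 / 8)" by simp
  ultimately show ?thesis using gE_poly4[of v] unfolding PB_def by linarith
qed

lemma gE_tail:
  assumes "0 \<le> R" "R \<le> norm v"
  shows "gE v * poly3 (norm v) \<le> 100 * exp (- R\<^sup>2 / 8) * exp (- (norm v)\<^sup>2 / 8)"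
proof -
  have "R\<^sup>2 \<le> (norm v)\<^sup>2" using assms by (intro power_mono) auto
  then have "exp (- (norm v)\<^sup>2 / 4) \<le> exp (- R\<^sup>2 / 8) * exp (- (norm v)\<^sup>2 / 8)"
    by (simp flip: exp_add)
  then show ?thesis using gE_poly4[of v] by simp
qed

lemma gE_bound_q:
  assumes "\<bar>q\<bar> \<le> poly3 (norm v)"
  shows "\<bar>gE v * q\<bar> \<le> gE v * poly3 (norm v)"
  using assms gE_pos[of v] by (simp add: abs_mult)

lemma comp_poly: "\<bar>(v::real^'n) $ j\<bar> \<le> poly3 (norm v)"
  using component_le_norm_cart[of v j] poly3_ge(2)[of "norm v"] by simp

lemma comp2_poly: "\<bar>(if i = j then 1 else 0) - (v::real^'n) $ i * v $ j\<bar> \<le> poly3 (norm v)"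
proof -
  have "\<bar>v $ i * v $ j\<bar> \<le> norm v * norm v"
    unfolding abs_mult by (intro mult_mono component_le_norm_cart) auto
  moreover have "\<bar>(if i = j then 1 else 0) - v $ i * v $ j\<bar> \<le> \<bar>(if i = j then 1 else 0)\<bar> + \<bar>v $ i * v $ j\<bar>"
    by (rule abs_triangle_ineq4)
  moreover have "\<bar>(if i = j then 1 else 0::real)\<bar> \<le> 1" by auto
  ultimately have "\<bar>(if i = j then 1 else 0) - v $ i * v $ j\<bar> \<le> 1 + (norm v)\<^sup>2"
    unfolding power2_eq_square by linarith
  then show ?thesis using poly3_ge(3)[of "norm v"] by auto
qed

lemma one_poly: "\<bar>1\<bar> \<le> poly3 (norm (v::real^'n))"
  using poly3_ge(1)[of "norm v"] by simp

lemma PB_integrable: "integrable lborel (PB :: real^'n \<Rightarrow> real)"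
proof -
  have "integrable lborel (\<lambda>v::real^'n. 200 * exp (- (1/8) * (norm v)\<^sup>2))"
    by (intro integrable_mult_right integrable_gauss) simp
  moreover have eq: "(\<lambda>v::real^'n. 200 * exp (- (1/8) * (norm v)\<^sup>2)) = PB"
    by (auto simp: PB_def)
  ultimately show ?thesis by metis
qed

lemma vec_has_derivative:
  fixes F :: "real^'n \<Rightarrow> real^'m" and L :: "real^'n \<Rightarrow> real^'m"
  assumes "\<And>j. ((\<lambda>x. F x $ j) has_derivative (\<lambda>h. L h $ j)) (at x0)"
  shows "(F has_derivative L) (at x0)"
proof (subst has_derivative_componentwise_within, intro ballI)
  fix b :: "real^'m" assume "b \<in> Basis"
  then obtain j where b: "b = axis j 1" using axis_inverse by blast
  show "((\<lambda>x. F x \<bullet> b) has_derivative (\<lambda>x. L x \<bullet> b)) (at x0 within UNIV)"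
    using assms[of j] unfolding b cart_eq_inner_axis[symmetric] by simp
qed

lemma exp_small:
  fixes t :: real
  assumes "t > 0"
  shows "exp (- t) \<le> 4 / t\<^sup>2"
proof -
  have "1 + t/2 \<le> exp (t/2)" by (rule exp_ge_add_one_self)
  then have h: "t/2 \<le> exp (t/2)" by linarith
  have "(t/2)\<^sup>2 \<le> (exp (t/2))\<^sup>2" using assms by (intro power_mono[OF h]) auto
  also have "\<dots> = exp t" by (simp add: power2_eq_square flip: exp_add)
  finally have "t\<^sup>2 / 4 \<le> exp t" by (simp add: power_divide)
  then have "t\<^sup>2 * exp (- t) \<le> 4"
    by (simp add: exp_minus field_simps)
  then show ?thesis using assms by (simp add: field_simps)
qed

definition dk1 :: "real^'n \<Rightarrow> real^'n" where "dk1 v = - (gE v *\<^sub>R v)"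
definition k2 :: "'n \<Rightarrow> real^'n \<Rightarrow> real" where "k2 j v = gE v * v $ j"
definition dk2 :: "'n \<Rightarrow> real^'n \<Rightarrow> real^'n" where
  "dk2 j v = (\<chi> i. gE v * ((if i = j then 1 else 0) - v $ i * v $ j))"

lemma gE_meas: "gE \<in> borel_measurable borel"
  unfolding gE_def by (intro borel_measurable_continuous_onI) (auto intro!: continuous_intros)

lemma cont_gE: "continuous_on UNIV gE"
  unfolding gE_def by (auto intro!: continuous_intros)

lemma dk1_meas: "(\<lambda>v. dk1 v $ i) \<in> borel_measurable borel"
  unfolding dk1_def by (intro borel_measurable_continuous_onI) (auto intro!: continuous_intros cont_gE)

lemma k2_meas: "k2 j \<in> borel_measurable borel"
  unfolding k2_def by (intro borel_measurable_continuous_onI) (auto intro!: continuous_intros cont_gE)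

lemma dk2_meas: "(\<lambda>v. dk2 j v $ i) \<in> borel_measurable borel"
  unfolding dk2_def by (intro borel_measurable_continuous_onI) (auto intro!: continuous_intros cont_gE)

lemma gE_P: "\<bar>gE v\<bar> \<le> PB v"
  using gE_bound_q[OF one_poly, of v] gE_PB[of v] by simp

lemma dk1_P: "\<bar>dk1 v $ i\<bar> \<le> PB v"
  using gE_bound_q[OF comp_poly[of v i]] gE_PB[of v] by (simp add: dk1_def)

lemma k2_P: "\<bar>k2 j v\<bar> \<le> PB v"
  using gE_bound_q[OF comp_poly[of v j]] gE_PB[of v] by (simp add: k2_def)

lemma dk2_P: "\<bar>dk2 j v $ i\<bar> \<le> PB v"
  using gE_bound_q[OF comp2_poly[of i j v]] gE_PB[of v] by (simp add: dk2_def)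

lemma tay1: "norm s \<le> 1 \<Longrightarrow> \<bar>gE (v - s) - gE v + dk1 v \<bullet> s\<bar> \<le> (norm s)\<^sup>2 * PB v"
  using TB1[of s v] by (simp add: dk1_def)

lemma dk2_inner: "dk2 j v \<bullet> s = gE v * (s $ j - v $ j * (v \<bullet> s))"
proof -
  have "dk2 j v \<bullet> s = (\<Sum>i\<in>UNIV. gE v * ((if i = j then 1 else 0) - v $ i * v $ j) * s $ i)"
    by (simp add: dk2_def inner_vec_def)
  also have "\<dots> = (\<Sum>i\<in>UNIV. gE v * ((if i = j then s $ i else 0) - v $ j * (v $ i * s $ i)))"
    by (intro sum.cong) (auto simp: algebra_simps)
  also have "\<dots> = gE v * (\<Sum>i\<in>UNIV. (if i = j then s $ i else 0) - v $ j * (v $ i * s $ i))"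
    by (simp add: sum_distrib_left)
  also have "\<dots> = gE v * (s $ j - v $ j * (v \<bullet> s))"
    by (simp add: inner_vec_def sum_subtractf sum_distrib_left)
  finally show ?thesis .
qed

lemma tay2: "norm s \<le> 1 \<Longrightarrow> \<bar>k2 j (v - s) - k2 j v + dk2 j v \<bullet> s\<bar> \<le> (norm s)\<^sup>2 * PB v"
proof -
  assume s: "norm s \<le> 1"
  have "k2 j (v - s) - k2 j v + dk2 j v \<bullet> s
      = gE (v - s) * (v - s)$j - gE v * v$j - gE v * ((v \<bullet> s) * v$j - s$j)"
    by (simp add: k2_def dk2_inner algebra_simps)
  then show ?thesis using TB2[OF s, of v j] by simp
qed

lemma dk1_comp: "dk1 v $ j = - k2 j v"
  by (simp add: dk1_def k2_def)

lemma dk2_sym: "dk2 j v $ i = dk2 i v $ j"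
  by (simp add: dk2_def mult.commute eq_commute)

lemma Z_integrable: "integrable lborel (\<lambda>v::real^'n. exp (- (norm v)\<^sup>2 / 8))"
proof -
  have "integrable lborel (\<lambda>v::real^'n. exp (- (1/8) * (norm v)\<^sup>2))"
    by (intro integrable_gauss) simp
  moreover have eq: "(\<lambda>v::real^'n. exp (- (1/8) * (norm v)\<^sup>2)) = (\<lambda>v. exp (- (norm v)\<^sup>2 / 8))"
    by auto
  ultimately show ?thesis by metis
qed

lemma tail_bound:
  fixes g :: "real^'n \<Rightarrow> real" and q :: "real^'n \<Rightarrow> real" and xs :: "real^'n"
  assumes gm: "g \<in> borel_measurable borel" and gB: "\<And>y. \<bar>g y\<bar> \<le> B"
    and g0: "\<And>y. norm (y - xs) \<le> \<delta> \<Longrightarrow> g y = 0" and sg: "sg > 0" and dl: "\<delta> > 0"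
    and qm: "q \<in> borel_measurable borel" and qP: "\<And>v. \<bar>q v\<bar> \<le> poly3 (norm v)"
  shows "\<bar>\<integral>w. g (sg *\<^sub>R w) * (gE (w - (1/sg) *\<^sub>R xs) * q (w - (1/sg) *\<^sub>R xs)) \<partial>lborel\<bar>
         \<le> B * (100 * exp (- (\<delta>/sg)\<^sup>2 / 8)) * (\<integral>v. exp (- (norm (v::real^'n))\<^sup>2 / 8) \<partial>lborel)"
proof -
  define a where "a = (1/sg) *\<^sub>R xs"
  define ep where "ep = exp (- (\<delta>/sg)\<^sup>2 / 8)"
  define Z where "Z = (\<integral>v. exp (- (norm (v::real^'n))\<^sup>2 / 8) \<partial>lborel)"
  have B0: "0 \<le> B" using gB[of 0] abs_ge_zero[of "g 0"] by linarith
  have q'm: "(\<lambda>v. gE v * q v) \<in> borel_measurable borel" using gE_meas qm by measurable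
  have q'P: "\<bar>gE v * q v\<bar> \<le> PB v" for v using gE_bound_q[OF qP[of v]] gE_PB[of v] by linarith
  have intf: "integrable lborel (\<lambda>w. g (sg *\<^sub>R w) * (gE (w - a) * q (w - a)))"
    using int_shift_bound[OF gm gB q'm PB_integrable q'P, of sg a] by simp
  have intb: "integrable lborel (\<lambda>w. B * (100 * ep) * exp (- (norm (w + (- a)))\<^sup>2 / 8))"
    by (intro integrable_mult_right lborel_translate(1) Z_integrable)
  have intbv: "(\<integral>w. B * (100 * ep) * exp (- (norm (w + (- a)))\<^sup>2 / 8) \<partial>lborel) = B * (100 * ep) * Z"
    using lborel_translate(2)[OF Z_integrable, of "- a"] by (simp add: Z_def)
  have pw: "\<bar>g (sg *\<^sub>R w) * (gE (w - a) * q (w - a))\<bar> \<le> B * (100 * ep) * exp (- (norm (w + (- a)))\<^sup>2 / 8)" for w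
  proof (cases "norm (sg *\<^sub>R w - xs) \<le> \<delta>")
    case True
    then show ?thesis using g0 B0 by (simp add: ep_def)
  next
    case False
    define v where "v = w - a"
    have sv: "sg *\<^sub>R w - xs = sg *\<^sub>R v" using sg by (simp add: v_def a_def scaleR_diff_right)
    have nv: "\<delta> / sg \<le> norm v"
    proof -
      have "\<delta> \<le> sg * norm v" using False sv sg by simp
      then show ?thesis using sg by (simp add: divide_le_eq mult.commute)
    qed
    have "\<bar>g (sg *\<^sub>R w) * (gE v * q v)\<bar> = \<bar>g (sg *\<^sub>R w)\<bar> * \<bar>gE v * q v\<bar>" by (simp add: abs_mult)
    also have "\<dots> \<le> B * (gE v * poly3 (norm v))"
      using gB gE_bound_q[OF qP[of v]] B0 by (intro mult_mono) auto
    also have "\<dots> \<le> B * (100 * ep * exp (- (norm v)\<^sup>2 / 8))"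
      using gE_tail[OF _ nv] sg dl B0 by (intro mult_left_mono) (auto simp: ep_def)
    finally show ?thesis by (simp add: v_def mult.assoc)
  qed
  have "\<bar>\<integral>w. g (sg *\<^sub>R w) * (gE (w - a) * q (w - a)) \<partial>lborel\<bar>
        \<le> (\<integral>w. norm (g (sg *\<^sub>R w) * (gE (w - a) * q (w - a))) \<partial>lborel)"
    unfolding real_norm_def[symmetric] by (rule integral_norm_bound)
  also have "\<dots> \<le> (\<integral>w. B * (100 * ep) * exp (- (norm (w + (- a)))\<^sup>2 / 8) \<partial>lborel)"
    using intf intb pw by (intro integral_mono) (auto intro: integrable_norm)
  also have "\<dots> = B * (100 * ep) * Z" by (rule intbv)
  finally show ?thesis by (simp add: a_def ep_def Z_def)
qed


lemma gE_integrable: "integrable lborel (gE :: real^'n \<Rightarrow> real)"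
  by (rule Bochner_Integration.integrable_bound[OF PB_integrable]) (auto simp: gE_meas intro: order_trans[OF gE_P] abs_ge_self)

lemma smoothed_formula:
  fixes psi :: "real^'n \<Rightarrow> real" and xs :: "real^'n"
  assumes f0m: "(\<lambda>y. min (psi y) (psi xs)) \<in> borel_measurable borel"
    and gB: "\<And>y. \<bar>min (psi y) (psi xs) - psi xs\<bar> \<le> B" and sg: "sg > 0"
  shows "smoothed_obj psi xs sg x =
     (2 * pi) powr (- real CARD('n) / 2) *
       (\<integral>w. (min (psi (sg *\<^sub>R w)) (psi xs) - psi xs) * gE (w - (1/sg) *\<^sub>R x) \<partial>lborel)
     + (\<integral>z. std_gauss_density (z::real^'n) * psi xs \<partial>lborel)"
proof -
  define c where "c = psi xs"
  define g where "g y = min (psi y) c - c" for y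
  define C :: real where "C = (2 * pi) powr (- real CARD('n) / 2)"
  have gm: "g \<in> borel_measurable borel" using f0m unfolding g_def c_def by measurable
  have gB': "\<bar>g y\<bar> \<le> B" for y using gB unfolding g_def c_def .
  have sgd: "std_gauss_density z = C * gE z" for z :: "real^'n"
    by (simp add: std_gauss_density_def gE_def C_def)
  have sgdm: "(std_gauss_density :: real^'n \<Rightarrow> real) \<in> borel_measurable borel"
    unfolding std_gauss_density_def by measurable
  have sgdm': "(std_gauss_density :: real^'n \<Rightarrow> real) \<in> borel_measurable lborel"
    using sgdm by simp
  have sgd0: "0 \<le> std_gauss_density z" for z :: "real^'n" by (simp add: std_gauss_density_def)
  have sgdi: "integrable lborel (std_gauss_density :: real^'n \<Rightarrow> real)"
    unfolding sgd[abs_def] by (intro integrable_mult_right gE_integrable)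
  have fm: "(\<lambda>z. min (psi (x + sg *\<^sub>R z)) c) \<in> borel_measurable lborel"
    using f0m unfolding c_def by measurable
  have i2: "integrable lborel (\<lambda>z::real^'n. std_gauss_density z * c)" by (rule integrable_mult_left) (rule sgdi)
  have i1: "integrable lborel (\<lambda>z. std_gauss_density z * g (x + sg *\<^sub>R z))"
  proof (rule Bochner_Integration.integrable_bound)
    show "integrable lborel (\<lambda>z::real^'n. B * std_gauss_density z)" by (intro integrable_mult_right sgdi)
    show "(\<lambda>z. std_gauss_density z * g (x + sg *\<^sub>R z)) \<in> borel_measurable lborel"
      using gm sgdm by measurable
    have B0: "0 \<le> B" using gB'[of 0] abs_ge_zero[of "g 0"] by linarith
    show "AE z in lborel. norm (std_gauss_density z * g (x + sg *\<^sub>R z)) \<le> norm (B * std_gauss_density z)"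
      using gB' sgd0 B0 by (intro AE_I2) (simp add: abs_mult abs_of_nonneg[OF sgd0] abs_of_nonneg[OF B0] mult.commute[of B] mult_left_mono[OF gB' sgd0])
  qed
  have "smoothed_obj psi xs sg x = (\<integral>z. min (psi (x + sg *\<^sub>R z)) c \<partial>std_gauss)"
    by (simp add: smoothed_obj_def c_def)
  also have "\<dots> = (\<integral>z. std_gauss_density z * min (psi (x + sg *\<^sub>R z)) c \<partial>lborel)"
    unfolding std_gauss_def using fm sgdm' sgd0 by (subst integral_density) auto
  also have "\<dots> = (\<integral>z. std_gauss_density z * g (x + sg *\<^sub>R z) + std_gauss_density z * c \<partial>lborel)"
    by (simp add: g_def algebra_simps)
  also have "\<dots> = (\<integral>z. std_gauss_density z * g (x + sg *\<^sub>R z) \<partial>lborel) + (\<integral>z. std_gauss_density (z::real^'n) * c \<partial>lborel)"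
    using i1 i2 by simp
  also have "(\<integral>z. std_gauss_density z * g (x + sg *\<^sub>R z) \<partial>lborel)
      = C * (\<integral>w. g (sg *\<^sub>R w) * gE (w - (1/sg) *\<^sub>R x) \<partial>lborel)"
  proof -
    define F where "F z = C * (gE z * g (x + sg *\<^sub>R z))" for z
    have Fi: "integrable lborel F"
    proof (rule Bochner_Integration.integrable_bound)
      show "integrable lborel (\<lambda>z::real^'n. B * std_gauss_density z)" by (intro integrable_mult_right sgdi)
      show "F \<in> borel_measurable lborel" unfolding F_def using gm gE_meas by measurable
      have B0: "0 \<le> B" using gB'[of 0] abs_ge_zero[of "g 0"] by linarith
      show "AE z in lborel. norm (F z) \<le> norm (B * std_gauss_density z)"
      proof (intro AE_I2)
        fix z :: "real^'n"
        have "(\<bar>C\<bar> * \<bar>gE z\<bar>) * \<bar>g (x + sg *\<^sub>R z)\<bar> \<le> (\<bar>C\<bar> * \<bar>gE z\<bar>) * B"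
          by (rule mult_left_mono[OF gB']) simp
        then show "norm (F z) \<le> norm (B * std_gauss_density z)"
          by (simp add: F_def sgd abs_mult abs_of_nonneg[OF B0] algebra_simps)
      qed
    qed
    have "(\<integral>z. std_gauss_density z * g (x + sg *\<^sub>R z) \<partial>lborel) = (\<integral>z. F z \<partial>lborel)"
      by (simp add: F_def sgd mult.assoc)
    also have "\<dots> = (\<integral>w. F (w + (- ((1/sg) *\<^sub>R x))) \<partial>lborel)"
      by (rule lborel_translate(2)[OF Fi, symmetric])
    also have "\<dots> = (\<integral>w. C * (g (sg *\<^sub>R w) * gE (w - (1/sg) *\<^sub>R x)) \<partial>lborel)"
    proof (intro Bochner_Integration.integral_cong refl)
      fix w :: "real^'n"
      have "x + sg *\<^sub>R (w + - ((1 / sg) *\<^sub>R x)) = sg *\<^sub>R w"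
        using sg by (simp add: scaleR_diff_right)
      then show "F (w + - ((1 / sg) *\<^sub>R x)) = C * (g (sg *\<^sub>R w) * gE (w - (1 / sg) *\<^sub>R x))"
        by (simp add: F_def mult.commute)
    qed
    also have "\<dots> = C * (\<integral>w. g (sg *\<^sub>R w) * gE (w - (1/sg) *\<^sub>R x) \<partial>lborel)" by simp
    finally show ?thesis .
  qed
  finally show ?thesis by (simp add: C_def g_def c_def)
qed


lemma nonmeas_case:
  fixes psi :: "real^'n \<Rightarrow> real" and xs :: "real^'n"
  assumes nm: "(\<lambda>y. min (psi y) (psi xs)) \<notin> borel_measurable borel" and sg: "sg > 0" and eps: "eps > 0"
  shows "approx_local_min psi eps sg xs"
proof -
  let ?f0 = "\<lambda>y. min (psi y) (psi xs)"
  have S0: "smoothed_obj psi xs sg = (\<lambda>x. 0)"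
  proof
    fix x :: "real^'n"
    have "\<not> integrable std_gauss (\<lambda>z. min (psi (x + sg *\<^sub>R z)) (psi xs))"
    proof
      assume "integrable std_gauss (\<lambda>z. min (psi (x + sg *\<^sub>R z)) (psi xs))"
      then have m1: "(\<lambda>z. ?f0 (x + sg *\<^sub>R z)) \<in> borel_measurable std_gauss"
        by (rule borel_measurable_integrable)
      have "sets std_gauss = sets (borel :: (real^'n) measure)" by (simp add: std_gauss_def)
      then have m2: "(\<lambda>z. ?f0 (x + sg *\<^sub>R z)) \<in> borel_measurable borel"
        using m1 measurable_cong_sets[of std_gauss borel borel borel] by simp
      have "(\<lambda>y. (\<lambda>z. ?f0 (x + sg *\<^sub>R z)) ((1/sg) *\<^sub>R (y - x))) \<in> borel_measurable borel"
        by (rule measurable_compose[OF _ m2]) simp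
      moreover have "(\<lambda>y. (\<lambda>z. ?f0 (x + sg *\<^sub>R z)) ((1/sg) *\<^sub>R (y - x))) = ?f0"
        using sg by auto
      ultimately show False using nm by simp
    qed
    then show "smoothed_obj psi xs sg x = 0" unfolding smoothed_obj_def by (rule not_integrable_integral_eq)
  qed
  have H0: "lambda_min (0 :: real^'n^'n) \<ge> - sqrt eps"
    by (rule lambda_min_ge) (use eps in auto)
  show ?thesis unfolding approx_local_min_def
  proof (intro exI[of _ "\<lambda>_. 0"] exI[of _ "0 :: real^'n^'n"] conjI H0)
    show "\<forall>\<^sub>F x in nhds xs. (smoothed_obj psi xs sg has_derivative (\<lambda>h. (0::real^'n) \<bullet> h)) (at x)"
      unfolding S0 by (simp add: has_derivative_const)
    show "((\<lambda>_. 0 :: real^'n) has_derivative (\<lambda>h. (0 :: real^'n^'n) *v h)) (at xs)"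
      by (simp add: has_derivative_const)
    show "norm (0 :: real^'n) \<le> eps" using eps by simp
  qed
qed


lemma eps_bound:
  fixes sg \<delta> :: real assumes sg: "sg > 0" and dl: "\<delta> > 0"
  shows "exp (- (\<delta>/sg)\<^sup>2 / 8) \<le> 256 * sg^4 / \<delta>^4"
proof -
  define t where "t = (\<delta>/sg)\<^sup>2 / 8"
  have t: "t > 0" using sg dl by (simp add: t_def)
  have "exp (- (\<delta>/sg)\<^sup>2 / 8) = exp (- t)" by (simp add: t_def)
  also have "\<dots> \<le> 4 / t\<^sup>2" by (rule exp_small[OF t])
  also have "4 / t\<^sup>2 = 256 * sg^4 / \<delta>^4"
    using sg dl by (simp add: t_def power_divide field_simps power2_eq_square power4_eq_xxxx)
  finally show ?thesis .
qed

lemma final_arith: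
  fixes d Qc ep sg \<delta> eps R0 :: real
  assumes d1: "1 \<le> d" and Q0: "0 \<le> Qc" and sg: "0 < sg" "sg \<le> 1" and dl: "\<delta> > 0"
    and ep: "ep \<le> 256 * sg^4 / \<delta>^4" and ep0: "0 \<le> ep"
    and R0: "R0 = 256 * d\<^sup>2 * Qc / \<delta>^4"
    and sgK1: "sg \<le> eps / (R0 + 1)" and sgK2: "sg \<le> sqrt eps / (R0 + 1)"
  shows "d * (Qc * ep / sg) \<le> eps" and "d * (d * (Qc * ep / sg\<^sup>2)) \<le> sqrt eps"
proof -
  have R00: "0 \<le> R0" using R0 Q0 dl by simp
  have dd: "d \<le> d\<^sup>2" using d1 by (simp add: power2_eq_square)
  have "d * (Qc * ep / sg) \<le> d * (Qc * (256 * sg^4 / \<delta>^4) / sg)"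
    using ep Q0 d1 sg by (intro mult_left_mono divide_right_mono) auto
  also have "\<dots> = d * Qc * 256 / \<delta>^4 * sg^3"
    using sg by (simp add: field_simps power_eq_if)
  also have "\<dots> \<le> d\<^sup>2 * Qc * 256 / \<delta>^4 * sg^3"
    using dd Q0 sg dl by (intro mult_right_mono divide_right_mono mult_right_mono) auto
  also have "\<dots> = R0 * sg^3" using R0 by simp
  also have "\<dots> \<le> R0 * sg" using sg R00 by (intro mult_left_mono) (auto simp: power_le_one power_eq_if mult_le_one)
  also have "\<dots> \<le> (R0 + 1) * sg" using sg by simp
  also have "\<dots> \<le> eps" using sgK1 R00 by (simp add: field_simps)
  finally show "d * (Qc * ep / sg) \<le> eps" .
  have "d * (d * (Qc * ep / sg\<^sup>2)) \<le> d * (d * (Qc * (256 * sg^4 / \<delta>^4) / sg\<^sup>2))"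
    using ep Q0 d1 sg by (intro mult_left_mono divide_right_mono) auto
  also have "\<dots> = R0 * sg\<^sup>2"
    using sg R0 by (simp add: field_simps power_eq_if power2_eq_square)
  also have "\<dots> \<le> R0 * sg" using sg R00 by (intro mult_left_mono) (auto simp: power2_eq_square mult_le_one)
  also have "\<dots> \<le> (R0 + 1) * sg" using sg by simp
  also have "\<dots> \<le> sqrt eps" using sgK2 R00 by (simp add: field_simps)
  finally show "d * (d * (Qc * ep / sg\<^sup>2)) \<le> sqrt eps" .
qed


lemma meas_case:
  fixes psi :: "real ^ 'n \<Rightarrow> real" and xs :: "real ^ 'n" and b \<delta> :: real
  assumes b: "b > 0" and pb: "\<forall>x. \<bar>psi x\<bar> \<le> b"
    and dl: "\<delta> > 0" and lm: "\<forall>x. norm (x - xs) \<le> \<delta> \<longrightarrow> psi xs \<le> psi x"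
    and f0m: "(\<lambda>y. min (psi y) (psi xs)) \<in> borel_measurable borel"
    and eps: "eps > 0"
  shows "\<exists>sig_star > 0. \<forall>sg. 0 < sg \<and> sg \<le> sig_star \<longrightarrow> approx_local_min psi eps sg xs"
proof -
  define c where "c = psi xs"
  define g where "g y = min (psi y) c - c" for y
  have gm: "g \<in> borel_measurable borel" using f0m unfolding g_def c_def by measurable
  have gB: "\<bar>g y\<bar> \<le> 2 * b" for y
    using pb[rule_format, of y] pb[rule_format, of xs] by (auto simp: g_def c_def abs_le_iff min_def)
  have gB': "\<bar>min (psi y) (psi xs) - psi xs\<bar> \<le> 2 * b" for y using gB[of y] by (simp add: g_def c_def)
  have g0: "g y = 0" if "norm (y - xs) \<le> \<delta>" for y
    using lm that by (auto simp: g_def c_def min_def)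
  define d :: real where "d = real CARD('n)"
  have d1: "1 \<le> d" by (simp add: d_def)
  define C :: real where "C = (2 * pi) powr (- real CARD('n) / 2)"
  have C0: "0 \<le> C" by (simp add: C_def)
  define Z where "Z = (\<integral>v. exp (- (norm (v::real^'n))\<^sup>2 / 8) \<partial>lborel)"
  have Z0: "0 \<le> Z" unfolding Z_def by (intro integral_nonneg_AE) auto
  define Qc where "Qc = C * (2 * b * 100 * Z)"
  have Q0: "0 \<le> Qc" using C0 Z0 b by (simp add: Qc_def)
  define R0 where "R0 = 256 * d\<^sup>2 * Qc / \<delta>^4"
  have R00: "0 \<le> R0" using Q0 dl by (simp add: R0_def)
  define sstar where "sstar = min 1 (min (eps / (R0 + 1)) (sqrt eps / (R0 + 1)))"
  have sstar: "sstar > 0" using eps R00 by (simp add: sstar_def)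
  show ?thesis
  proof (intro exI[of _ sstar] conjI sstar allI impI)
    fix sg assume sgr: "0 < sg \<and> sg \<le> sstar"
    then have sg: "sg > 0" and sg1: "sg \<le> 1" and sgK1: "sg \<le> eps / (R0 + 1)" and sgK2: "sg \<le> sqrt eps / (R0 + 1)"
      by (auto simp: sstar_def)
    define T1 where "T1 x = (\<integral>w. g (sg *\<^sub>R w) * gE (w - (1/sg) *\<^sub>R x) \<partial>lborel)" for x
    define K0 where "K0 = (\<integral>z. std_gauss_density (z::real^'n) * psi xs \<partial>lborel)"
    have F1: "smoothed_obj psi xs sg = (\<lambda>x. C * T1 x + K0)"
      using smoothed_formula[OF f0m gB' sg] by (auto simp: T1_def K0_def C_def g_def c_def)
    define D1 where "D1 x = (\<chi> i. - (1/sg) * (\<integral>w. g (sg *\<^sub>R w) * (dk1 (w - (1/sg) *\<^sub>R x) $ i) \<partial>lborel))" for x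
    have KL1: "(T1 has_derivative (\<lambda>h. D1 x \<bullet> h)) (at x)" for x
      unfolding T1_def D1_def
      by (rule KL[OF gm gB sg gE_meas dk1_meas PB_integrable gE_P dk1_P tay1])
    define G where "G x = C *\<^sub>R D1 x" for x
    have DS: "(smoothed_obj psi xs sg has_derivative (\<lambda>h. G x \<bullet> h)) (at x)" for x
    proof -
      have "((\<lambda>x. C * T1 x + K0) has_derivative (\<lambda>h. C * (D1 x \<bullet> h))) (at x)"
        by (intro has_derivative_add_const has_derivative_mult_right KL1)
      moreover have "(\<lambda>h. C * (D1 x \<bullet> h)) = (\<lambda>h. G x \<bullet> h)" by (simp add: G_def)
      ultimately show ?thesis unfolding F1 by simp
    qed
    define T2 where "T2 j x = (\<integral>w. g (sg *\<^sub>R w) * k2 j (w - (1/sg) *\<^sub>R x) \<partial>lborel)" for j x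
    have Gj: "G x $ j = (C / sg) * T2 j x" for x j
    proof -
      have "(\<integral>w. g (sg *\<^sub>R w) * (dk1 (w - (1/sg) *\<^sub>R x) $ j) \<partial>lborel) = - T2 j x"
        by (simp add: T2_def dk1_comp)
      then show ?thesis by (simp add: G_def D1_def)
    qed
    define D2 where "D2 j = (\<chi> i. - (1/sg) * (\<integral>w. g (sg *\<^sub>R w) * (dk2 j (w - (1/sg) *\<^sub>R xs) $ i) \<partial>lborel))" for j
    have KL2: "(T2 j has_derivative (\<lambda>h. D2 j \<bullet> h)) (at xs)" for j
      unfolding T2_def D2_def
      by (rule KL[OF gm gB sg k2_meas dk2_meas PB_integrable k2_P dk2_P tay2])
    define H :: "real^'n^'n" where "H = (\<chi> j i. (C / sg) * (D2 j $ i))"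
    have DG: "(G has_derivative (\<lambda>h. H *v h)) (at xs)"
    proof (rule vec_has_derivative)
      fix j
      have "((\<lambda>x. (C / sg) * T2 j x) has_derivative (\<lambda>h. (C / sg) * (D2 j \<bullet> h))) (at xs)"
        by (intro has_derivative_mult_right KL2)
      moreover have "(\<lambda>h. (C / sg) * (D2 j \<bullet> h)) = (\<lambda>h. (H *v h) $ j)"
        by (auto simp: H_def matrix_vector_mult_def inner_vec_def sum_distrib_left mult.assoc)
      moreover have "(\<lambda>x. G x $ j) = (\<lambda>x. (C / sg) * T2 j x)" by (auto simp: Gj)
      ultimately show "((\<lambda>x. G x $ j) has_derivative (\<lambda>h. (H *v h) $ j)) (at xs)" by simp
    qed
    have Hsym: "H $ i $ j = H $ j $ i" for i j
      by (simp add: H_def D2_def dk2_sym)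
    define ep where "ep = exp (- (\<delta>/sg)\<^sup>2 / 8)"
    have ep0: "0 \<le> ep" by (simp add: ep_def)
    have epb: "ep \<le> 256 * sg^4 / \<delta>^4" unfolding ep_def by (rule eps_bound[OF sg dl])
    have T2b: "\<bar>T2 j xs\<bar> \<le> 2 * b * (100 * ep) * Z" for j
    proof -
      have qm: "(\<lambda>v::real^'n. v $ j) \<in> borel_measurable borel"
        by (intro borel_measurable_continuous_onI) (auto intro!: continuous_intros)
      show ?thesis
        using tail_bound[OF gm gB g0 sg dl qm comp_poly]
        by (simp add: T2_def k2_def ep_def Z_def)
    qed
    have D2b: "\<bar>\<integral>w. g (sg *\<^sub>R w) * (dk2 j (w - (1/sg) *\<^sub>R xs) $ i) \<partial>lborel\<bar> \<le> 2 * b * (100 * ep) * Z" for i j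
    proof -
      have qm: "(\<lambda>v::real^'n. (if i = j then 1 else 0) - v $ i * v $ j) \<in> borel_measurable borel"
        by (intro borel_measurable_continuous_onI) (auto intro!: continuous_intros)
      show ?thesis
        using tail_bound[OF gm gB g0 sg dl qm comp2_poly]
        by (simp add: dk2_def ep_def Z_def)
    qed
    have Gb: "\<bar>G xs $ j\<bar> \<le> Qc * ep / sg" for j
    proof -
      have "\<bar>G xs $ j\<bar> = (C / sg) * \<bar>T2 j xs\<bar>" using sg C0 by (simp add: Gj abs_mult)
      also have "\<dots> \<le> (C / sg) * (2 * b * (100 * ep) * Z)"
        using T2b sg C0 by (intro mult_left_mono) auto
      also have "\<dots> = Qc * ep / sg" by (simp add: Qc_def)
      finally show ?thesis .
    qed
    have Hb: "\<bar>H $ j $ i\<bar> \<le> Qc * ep / sg\<^sup>2" for i j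
    proof -
      have "\<bar>H $ j $ i\<bar> = (C / sg) * ((1/sg) * \<bar>\<integral>w. g (sg *\<^sub>R w) * (dk2 j (w - (1/sg) *\<^sub>R xs) $ i) \<partial>lborel\<bar>)"
        using sg C0 by (simp add: H_def D2_def abs_mult)
      also have "\<dots> \<le> (C / sg) * ((1/sg) * (2 * b * (100 * ep) * Z))"
        using D2b sg C0 by (intro mult_left_mono) auto
      also have "\<dots> = Qc * ep / sg\<^sup>2" by (simp add: Qc_def power2_eq_square)
      finally show ?thesis .
    qed
    have normG: "norm (G xs) \<le> eps"
    proof -
      have "norm (G xs) \<le> (\<Sum>j\<in>UNIV. \<bar>G xs $ j\<bar>)" by (rule norm_le_l1_cart)
      also have "\<dots> \<le> (\<Sum>j\<in>(UNIV::'n set). Qc * ep / sg)" by (intro sum_mono Gb)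
      also have "\<dots> = d * (Qc * ep / sg)" by (simp add: d_def)
      also have "\<dots> \<le> eps" by (rule final_arith(1)[OF d1 Q0 sg sg1 dl epb ep0 R0_def sgK1 sgK2])
      finally show ?thesis .
    qed
    have lamH: "lambda_min H \<ge> - sqrt eps"
    proof (rule lambda_min_ge[OF Hsym])
      have "(\<Sum>i\<in>UNIV. \<Sum>j\<in>UNIV. \<bar>H$i$j\<bar>) \<le> (\<Sum>i\<in>(UNIV::'n set). \<Sum>j\<in>(UNIV::'n set). Qc * ep / sg\<^sup>2)"
        by (intro sum_mono Hb)
      also have "\<dots> = d * (d * (Qc * ep / sg\<^sup>2))" by (simp add: d_def)
      also have "\<dots> \<le> sqrt eps" by (rule final_arith(2)[OF d1 Q0 sg sg1 dl epb ep0 R0_def sgK1 sgK2])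
      finally show "(\<Sum>i\<in>UNIV. \<Sum>j\<in>UNIV. \<bar>H$i$j\<bar>) \<le> sqrt eps" .
    qed
    show "approx_local_min psi eps sg xs"
      unfolding approx_local_min_def
      by (intro exI[of _ G] exI[of _ H] conjI normG lamH DG always_eventually allI DS)
  qed
qed

theorem lemma5p1:
  fixes psi :: "real ^ 'n \<Rightarrow> real" and xs :: "real ^ 'n" and b \<delta> :: real
  assumes "b > 0" and "\<forall>x. \<bar>psi x\<bar> \<le> b"
    and "\<delta> > 0" and "\<forall>x. norm (x - xs) \<le> \<delta> \<longrightarrow> psi xs \<le> psi x"
  shows "\<forall>eps > 0. \<exists>sig_star > 0. \<forall>sg. 0 < sg \<and> sg \<le> sig_star \<longrightarrow>
           approx_local_min psi eps sg xs"
proof (intro allI impI)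
  fix eps :: real assume eps: "eps > 0"
  show "\<exists>sig_star > 0. \<forall>sg. 0 < sg \<and> sg \<le> sig_star \<longrightarrow> approx_local_min psi eps sg xs"
  proof (cases "(\<lambda>y. min (psi y) (psi xs)) \<in> borel_measurable borel")
    case True
    show ?thesis by (rule meas_case[OF assms True eps])
  next
    case False
    show ?thesis
      by (intro exI[of _ 1] conjI allI impI) (auto intro!: nonmeas_case[OF False _ eps])
  qed
qed

end
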